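(* Let $n\ge3$ and let $R,V_1,\ldots,V_{n-1}\in H^1(K_n;\mathbb{Z}_2)$ be classes giving an algebra isomorphism $H^*(K_n;\mathbb{Z}_2)\cong\mathbb{Z}_2[R,V_1,\ldots,V_{n-1}]/(R^2,V_i^2+RV_i)$. For $x\in H^1(K_n;\mathbb{Z}_2)$ write $\overline{x}=x\otimes1+1\otimes x\in H^1(K_n\times K_n;\mathbb{Z}_2)$. Then in $H^*(K_n\times K_n;\mathbb{Z}_2)$, $$\overline{V}_1^{\,3}\,\overline{V}_2^{\,2}\,\overline{V}_3\cdots\overline{V}_{n-1}\ne0,$$ but every product of at least $n+3$ factors, each of the form $\overline{V}_i$ or $\overline{R}$, is $0$.
   Context: $K_n=(S^1)^n/\bigl((z_1,\ldots,z_{n-1},z_n)\sim(\overline{z}_1,\ldots,\overline{z}_{n-1},-z_n)\bigr)$, where $S^1\subset\mathbb{C}$ is the unit circle and $\overline{z}$ is complex conjugation. $H^*(K_n\times K_n;\mathbb{Z}_2)$ is identified with $H^*(K_n;\mathbb{Z}_2)\otimes H^*(K_n;\mathbb{Z}_2)$ via the Künneth isomorphism. *)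

theory Defs
  imports Main
begin

text \<open>Concrete model of H^*(K_n;Z_2) = Z_2[R,V_1,...,V_{n-1}]/(R^2, V_i^2 + R V_i).
  A Z_2-basis is given by the monomials R^a V_S with a in {0,1} and S a subset of {1..n-1};
  a basis monomial is encoded as the pair (a, S).  Since V_i^2 = R V_i (char 2) and R^2 = 0,
  R^a V_S * R^b V_T = R^(a + b + |S \<inter> T|) V_(S \<union> T), which is 0 if the R-exponent is at least 2.
  An element of a Z_2-algebra with basis 'b is a finite set of basis elements
  (its support; addition is symmetric difference).\<close>

type_synonym mono = "nat \<times> nat set"

definition mono_mult :: "mono \<Rightarrow> mono \<Rightarrow> mono option" where
  "mono_mult p q =
     (let e = fst p + fst q + card (snd p \<inter> snd q)
      in if e \<ge> 2 then None else Some (e, snd p \<union> snd q))"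

definition alg_mult :: "('b \<Rightarrow> 'b \<Rightarrow> 'b option) \<Rightarrow> 'b set \<Rightarrow> 'b set \<Rightarrow> 'b set" where
  "alg_mult mul x y =
     {m. odd (card {(p, q). p \<in> x \<and> q \<in> y \<and> mul p q = Some m})}"

text \<open>Basis multiplication of the tensor product A \<otimes> A (char 2, so no Koszul signs).\<close>
definition tensor_mult :: "('b \<Rightarrow> 'b \<Rightarrow> 'b option) \<Rightarrow> ('b \<times> 'b) \<Rightarrow> ('b \<times> 'b) \<Rightarrow> ('b \<times> 'b) option" where
  "tensor_mult mul p q =
     (case (mul (fst p) (fst q), mul (snd p) (snd q)) of
        (Some a, Some b) \<Rightarrow> Some (a, b)
      | _ \<Rightarrow> None)"

text \<open>H^*(K_n \<times> K_n;Z_2) \<cong> H^*(K_n) \<otimes> H^*(K_n) (Kuenneth), elements as finite sets of basis pairs.\<close>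
type_synonym elt2 = "(mono \<times> mono) set"

definition KK_mult :: "elt2 \<Rightarrow> elt2 \<Rightarrow> elt2" where
  "KK_mult = alg_mult (tensor_mult mono_mult)"

definition KK_one :: elt2 where
  "KK_one = {((0, {}), (0, {}))}"

definition bar :: "mono \<Rightarrow> elt2" where
  "bar m = {(m, (0, {})), ((0, {}), m)}"

definition Rbar :: elt2 where
  "Rbar = bar (1, {})"

definition Vbar :: "nat \<Rightarrow> elt2" where
  "Vbar i = bar (0, {i})"

definition KK_prod :: "elt2 list \<Rightarrow> elt2" where
  "KK_prod xs = foldr KK_mult xs KK_one"

end

theory Submission
  imports Defs "HOL-Library.Z2" "HOL-Library.Multiset"
begin

lemma of_nat_bit_one: "(of_nat k :: bit) = 1 \<longleftrightarrow> odd k"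
  by (induction k) auto

lemma card_filter_bit:
  "finite A \<Longrightarrow> (of_nat (card {a\<in>A. P a}) :: bit) = (\<Sum>a\<in>A. if P a then 1 else 0)"
proof -
  have "{a\<in>A. P a} = A \<inter> Collect P" by auto
  then show "finite A \<Longrightarrow> ?thesis" by (simp add: sum.If_cases)
qed

definition sbit :: "('b \<Rightarrow> 'b \<Rightarrow> 'b option) \<Rightarrow> 'b set \<Rightarrow> 'b set \<Rightarrow> 'b \<Rightarrow> bit" where
  "sbit mul x y m = (\<Sum>p\<in>x. \<Sum>q\<in>y. if mul p q = Some m then 1 else 0)"

lemma mem_alg_mult:
  assumes "finite x" "finite y"
  shows "m \<in> alg_mult mul x y \<longleftrightarrow> sbit mul x y m = 1"
proof -
  have e: "{(p, q). p \<in> x \<and> q \<in> y \<and> mul p q = Some m} = {pq \<in> x \<times> y. mul (fst pq) (snd pq) = Some m}"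
    by force
  have "(of_nat (card {pq \<in> x \<times> y. mul (fst pq) (snd pq) = Some m}) :: bit)
        = (\<Sum>pq\<in>x \<times> y. if mul (fst pq) (snd pq) = Some m then 1 else 0)"
    using assms by (intro card_filter_bit) simp
  also have "\<dots> = sbit mul x y m"
    unfolding sbit_def sum.cartesian_product by (simp add: case_prod_beta)
  finally have "(of_nat (card {(p, q). p \<in> x \<and> q \<in> y \<and> mul p q = Some m}) :: bit) = sbit mul x y m"
    unfolding e .
  then show ?thesis unfolding alg_mult_def mem_Collect_eq by (simp only: of_nat_bit_one[symmetric])
qed

lemma coeff_alg_mult:
  assumes "finite x" "finite y"
  shows "(if m \<in> alg_mult mul x y then 1 else 0) = sbit mul x y m"
  using mem_alg_mult[OF assms, of m mul] by (metis bit_not_one_iff)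

definition supp :: "('b \<Rightarrow> 'b \<Rightarrow> 'b option) \<Rightarrow> 'b set \<Rightarrow> 'b set \<Rightarrow> 'b set" where
  "supp mul x y = {a. \<exists>p\<in>x. \<exists>q\<in>y. mul p q = Some a}"

lemma finite_supp: "finite x \<Longrightarrow> finite y \<Longrightarrow> finite (supp mul x y)"
proof -
  assume "finite x" "finite y"
  have "supp mul x y \<subseteq> (\<lambda>pq. the (mul (fst pq) (snd pq))) ` (x \<times> y)"
    unfolding supp_def by force
  then show ?thesis using \<open>finite x\<close> \<open>finite y\<close> finite_subset by blast
qed

lemma alg_mult_sub_supp: "alg_mult mul x y \<subseteq> supp mul x y"
proof
  fix m assume "m \<in> alg_mult mul x y"
  then have "card {(p, q). p \<in> x \<and> q \<in> y \<and> mul p q = Some m} \<noteq> 0"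
    unfolding alg_mult_def by (metis (no_types, lifting) even_zero mem_Collect_eq)
  then have "{(p, q). p \<in> x \<and> q \<in> y \<and> mul p q = Some m} \<noteq> {}" by (metis card.empty)
  then show "m \<in> supp mul x y" unfolding supp_def by blast
qed

lemma finite_alg_mult: "finite x \<Longrightarrow> finite y \<Longrightarrow> finite (alg_mult mul x y)"
  using finite_supp alg_mult_sub_supp finite_subset by metis

lemma sum_alg_mult:
  assumes "finite x" "finite y"
  shows "(\<Sum>a\<in>alg_mult mul x y. g a) = (\<Sum>a\<in>supp mul x y. sbit mul x y a * g a)"
proof -
  have "(\<Sum>a\<in>supp mul x y. sbit mul x y a * g a)
     = (\<Sum>a\<in>supp mul x y. (if a \<in> alg_mult mul x y then 1 else 0) * g a)"
    using coeff_alg_mult[OF assms] by (intro sum.cong) simp_all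
  also have "\<dots> = (\<Sum>a\<in>supp mul x y. if a \<in> alg_mult mul x y then g a else 0)"
    by (intro sum.cong) simp_all
  also have "\<dots> = sum g (supp mul x y \<inter> alg_mult mul x y)"
    using finite_supp[OF assms] by (simp only: sum.inter_restrict)
  also have "supp mul x y \<inter> alg_mult mul x y = alg_mult mul x y"
    using alg_mult_sub_supp[of mul x y] by blast
  finally show ?thesis by simp
qed

lemma inner_bind:
  assumes "p \<in> x" "q \<in> y" "finite x" "finite y"
  shows "(\<Sum>a\<in>supp mul x y. (if mul p q = Some a then 1 else 0) * f a)
       = (case mul p q of None \<Rightarrow> 0 | Some a \<Rightarrow> (f a :: bit))"
proof (cases "mul p q")
  case None then show ?thesis by simp
next
  case (Some a0)
  then have "a0 \<in> supp mul x y" using assms unfolding supp_def by auto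
  moreover have "(\<Sum>a\<in>supp mul x y. (if mul p q = Some a then 1 else 0) * f a)
      = (\<Sum>a\<in>supp mul x y. if a = a0 then f a0 else 0)"
    using Some by (intro sum.cong) auto
  ultimately show ?thesis using Some finite_supp[OF assms(3,4)] by simp
qed

lemma ind_bind: "(case mb of None \<Rightarrow> 0 | Some a \<Rightarrow> (if g a = Some m then 1 else 0))
   = (if Option.bind mb g = Some m then (1::bit) else 0)"
  by (cases mb) simp_all

lemma sbit_assoc1:
  assumes "finite x" "finite y" "finite z"
  shows "sbit mul (alg_mult mul x y) z m =
    (\<Sum>p\<in>x. \<Sum>q\<in>y. \<Sum>r\<in>z. if Option.bind (mul p q) (\<lambda>a. mul a r) = Some m then 1 else 0)"
proof -
  have "sbit mul (alg_mult mul x y) z m = (\<Sum>a\<in>supp mul x y. sbit mul x y a *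
          (\<Sum>r\<in>z. if mul a r = Some m then 1 else 0))"
    unfolding sbit_def[of mul "alg_mult mul x y"] by (rule sum_alg_mult[OF assms(1,2)])
  also have "\<dots> = (\<Sum>a\<in>supp mul x y. \<Sum>r\<in>z. \<Sum>p\<in>x. \<Sum>q\<in>y.
       (if mul p q = Some a then 1 else 0) * (if mul a r = Some m then 1 else 0))"
    unfolding sbit_def by (simp only: sum_distrib_left sum_distrib_right)
  also have "\<dots> = (\<Sum>r\<in>z. \<Sum>a\<in>supp mul x y. \<Sum>p\<in>x. \<Sum>q\<in>y.
       (if mul p q = Some a then 1 else 0) * (if mul a r = Some m then 1 else 0))"
    by (rule sum.swap)
  also have "\<dots> = (\<Sum>r\<in>z. \<Sum>p\<in>x. \<Sum>a\<in>supp mul x y. \<Sum>q\<in>y.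
       (if mul p q = Some a then 1 else 0) * (if mul a r = Some m then 1 else 0))"
    by (rule sum.cong[OF refl], rule sum.swap)
  also have "\<dots> = (\<Sum>r\<in>z. \<Sum>p\<in>x. \<Sum>q\<in>y. \<Sum>a\<in>supp mul x y.
       (if mul p q = Some a then 1 else 0) * (if mul a r = Some m then 1 else 0))"
    by (rule sum.cong[OF refl], rule sum.cong[OF refl], rule sum.swap)
  also have "\<dots> = (\<Sum>p\<in>x. \<Sum>r\<in>z. \<Sum>q\<in>y. \<Sum>a\<in>supp mul x y.
       (if mul p q = Some a then 1 else 0) * (if mul a r = Some m then 1 else 0))"
    by (rule sum.swap)
  also have "\<dots> = (\<Sum>p\<in>x. \<Sum>q\<in>y. \<Sum>r\<in>z. \<Sum>a\<in>supp mul x y.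
       (if mul p q = Some a then 1 else 0) * (if mul a r = Some m then 1 else 0))"
    by (rule sum.cong[OF refl], rule sum.swap)
  also have "\<dots> = (\<Sum>p\<in>x. \<Sum>q\<in>y. \<Sum>r\<in>z. if Option.bind (mul p q) (\<lambda>a. mul a r) = Some m then 1 else 0)"
    using inner_bind[OF _ _ assms(1,2), of _ _ mul "\<lambda>a. if mul a _ = Some m then 1 else 0"]
    by (simp add: ind_bind)
  finally show ?thesis .
qed

lemma sbit_assoc2:
  assumes "finite x" "finite y" "finite z"
  shows "sbit mul x (alg_mult mul y z) m =
    (\<Sum>p\<in>x. \<Sum>q\<in>y. \<Sum>r\<in>z. if Option.bind (mul q r) (\<lambda>b. mul p b) = Some m then 1 else 0)"
proof -
  have "sbit mul x (alg_mult mul y z) m = (\<Sum>p\<in>x. \<Sum>b\<in>supp mul y z. sbit mul y z b *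
          (if mul p b = Some m then 1 else 0))"
    unfolding sbit_def[of mul x] by (rule sum.cong[OF refl], rule sum_alg_mult[OF assms(2,3)])
  also have "\<dots> = (\<Sum>p\<in>x. \<Sum>b\<in>supp mul y z. \<Sum>q\<in>y. \<Sum>r\<in>z.
       (if mul q r = Some b then 1 else 0) * (if mul p b = Some m then 1 else 0))"
    unfolding sbit_def by (simp only: sum_distrib_left sum_distrib_right)
  also have "\<dots> = (\<Sum>p\<in>x. \<Sum>q\<in>y. \<Sum>b\<in>supp mul y z. \<Sum>r\<in>z.
       (if mul q r = Some b then 1 else 0) * (if mul p b = Some m then 1 else 0))"
    by (rule sum.cong[OF refl], rule sum.swap)
  also have "\<dots> = (\<Sum>p\<in>x. \<Sum>q\<in>y. \<Sum>r\<in>z. \<Sum>b\<in>supp mul y z.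
       (if mul q r = Some b then 1 else 0) * (if mul p b = Some m then 1 else 0))"
    by (rule sum.cong[OF refl], rule sum.cong[OF refl], rule sum.swap)
  also have "\<dots> = (\<Sum>p\<in>x. \<Sum>q\<in>y. \<Sum>r\<in>z. if Option.bind (mul q r) (\<lambda>b. mul p b) = Some m then 1 else 0)"
    using inner_bind[OF _ _ assms(2,3), of _ _ mul "\<lambda>b. if mul _ b = Some m then 1 else 0"]
    by (simp add: ind_bind)
  finally show ?thesis .
qed

lemma alg_mult_assoc:
  assumes "finite x" "finite y" "finite z"
    and A: "\<And>p q r. p \<in> x \<Longrightarrow> q \<in> y \<Longrightarrow> r \<in> z \<Longrightarrow>
       Option.bind (mul p q) (\<lambda>a. mul a r) = Option.bind (mul q r) (\<lambda>b. mul p b)"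
  shows "alg_mult mul (alg_mult mul x y) z = alg_mult mul x (alg_mult mul y z)"
proof (rule set_eqI)
  fix m
  have "sbit mul (alg_mult mul x y) z m = sbit mul x (alg_mult mul y z) m"
    unfolding sbit_assoc1[OF assms(1-3)] sbit_assoc2[OF assms(1-3)]
    using A by (intro sum.cong refl) simp
  then show "m \<in> alg_mult mul (alg_mult mul x y) z \<longleftrightarrow> m \<in> alg_mult mul x (alg_mult mul y z)"
    using mem_alg_mult finite_alg_mult assms(1-3) by metis
qed

lemma alg_mult_comm:
  assumes "\<And>p q. mul p q = mul q p"
  shows "alg_mult mul x y = alg_mult mul y x"
proof -
  have "{(p, q). p \<in> x \<and> q \<in> y \<and> mul p q = Some m} = prod.swap ` {(q, p). q \<in> y \<and> p \<in> x \<and> mul q p = Some m}" for m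
    using assms by force
  then have "card {(p, q). p \<in> x \<and> q \<in> y \<and> mul p q = Some m} = card {(q, p). q \<in> y \<and> p \<in> x \<and> mul q p = Some m}" for m
    by (simp add: card_image)
  then show ?thesis unfolding alg_mult_def by simp
qed

definition gm :: "mono \<Rightarrow> bool" where "gm m \<longleftrightarrow> fst m \<le> 1 \<and> finite (snd m)"
definition gp :: "mono \<times> mono \<Rightarrow> bool" where "gp pq \<longleftrightarrow> gm (fst pq) \<and> gm (snd pq)"
definition good :: "elt2 \<Rightarrow> bool" where "good x \<longleftrightarrow> finite x \<and> (\<forall>pq\<in>x. gp pq)"

lemma mono_mult_comm: "mono_mult p q = mono_mult q p"
proof -
  have "snd p \<union> snd q = snd q \<union> snd p" "snd p \<inter> snd q = snd q \<inter> snd p" by blast+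
  then show ?thesis unfolding mono_mult_def Let_def by (simp add: add.commute)
qed

lemma mono_mult_gm: "gm p \<Longrightarrow> gm q \<Longrightarrow> mono_mult p q = Some m \<Longrightarrow> gm m"
  unfolding mono_mult_def gm_def Let_def by (auto split: if_splits)

lemma card_key:
  assumes "finite S" "finite T" "finite U"
  shows "card (S \<inter> T) + card ((S \<union> T) \<inter> U) = card (T \<inter> U) + card (S \<inter> (T \<union> U))"
proof -
  have e1: "(S \<union> T) \<inter> U = (S \<inter> U) \<union> (T \<inter> U)" "S \<inter> U \<inter> (T \<inter> U) = S \<inter> T \<inter> U" by blast+
  have e2: "S \<inter> (T \<union> U) = (S \<inter> T) \<union> (S \<inter> U)" "S \<inter> T \<inter> (S \<inter> U) = S \<inter> T \<inter> U" by blast+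
  have a: "card (S \<inter> U) + card (T \<inter> U) = card ((S \<union> T) \<inter> U) + card (S \<inter> T \<inter> U)"
  proof -
    have "card (S \<inter> U) + card (T \<inter> U) = card ((S \<inter> U) \<union> (T \<inter> U)) + card (S \<inter> U \<inter> (T \<inter> U))"
      by (rule card_Un_Int) (use assms in simp_all)
    then show ?thesis by (simp only: e1)
  qed
  have b: "card (S \<inter> T) + card (S \<inter> U) = card (S \<inter> (T \<union> U)) + card (S \<inter> T \<inter> U)"
  proof -
    have "card (S \<inter> T) + card (S \<inter> U) = card ((S \<inter> T) \<union> (S \<inter> U)) + card (S \<inter> T \<inter> (S \<inter> U))"
      by (rule card_Un_Int) (use assms in simp_all)
    then show ?thesis by (simp only: e2)
  qed
  from a b show ?thesis by linarith
qed

lemma mono_mult_assoc: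
  assumes "finite S" "finite T" "finite U"
  shows "Option.bind (mono_mult (a, S) (b, T)) (\<lambda>m. mono_mult m (c, U))
       = Option.bind (mono_mult (b, T) (c, U)) (\<lambda>m. mono_mult (a, S) m)"
proof -
  have k: "card (S \<inter> T) + card ((S \<union> T) \<inter> U) = card (T \<inter> U) + card (S \<inter> (T \<union> U))"
    using card_key[OF assms] .
  have m1: "card (S \<inter> T) \<le> card (S \<inter> (T \<union> U))" using assms by (intro card_mono) auto
  have m2: "card (T \<inter> U) \<le> card ((S \<union> T) \<inter> U)" using assms by (intro card_mono) auto
  have u: "S \<union> T \<union> U = S \<union> (T \<union> U)" by blast
  show ?thesis using k m1 m2 unfolding mono_mult_def Let_def u by auto
qed

lemma mono_one: "fst p \<le> 1 \<Longrightarrow> mono_mult (0, {}) p = Some p"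
  unfolding mono_mult_def Let_def by (cases p) auto

lemma tensor_comm: "tensor_mult mono_mult p q = tensor_mult mono_mult q p"
proof -
  have "mono_mult (fst p) (fst q) = mono_mult (fst q) (fst p)"
       "mono_mult (snd p) (snd q) = mono_mult (snd q) (snd p)" by (rule mono_mult_comm)+
  then show ?thesis by (simp only: tensor_mult_def)
qed

lemma tensor_gp: "gp p \<Longrightarrow> gp q \<Longrightarrow> tensor_mult mono_mult p q = Some m \<Longrightarrow> gp m"
proof -
  assume a: "gp p" "gp q" "tensor_mult mono_mult p q = Some m"
  obtain m1 m2 where s: "mono_mult (fst p) (fst q) = Some m1" "mono_mult (snd p) (snd q) = Some m2"
      "m = (m1, m2)"
    using a(3) unfolding tensor_mult_def by (auto split: option.splits)
  show "gp m" using a(1,2) mono_mult_gm[OF _ _ s(1)] mono_mult_gm[OF _ _ s(2)] s(3)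
    unfolding gp_def by simp
qed

definition comb :: "'b option \<Rightarrow> 'b option \<Rightarrow> ('b \<times> 'b) option" where
  "comb o1 o2 = (case (o1, o2) of (Some a, Some b) \<Rightarrow> Some (a, b) | _ \<Rightarrow> None)"

lemma tensor_L: "Option.bind (tensor_mult mul (p1, p2) (q1, q2)) (\<lambda>a. tensor_mult mul a (r1, r2))
   = comb (Option.bind (mul p1 q1) (\<lambda>a. mul a r1)) (Option.bind (mul p2 q2) (\<lambda>a. mul a r2))"
  by (cases "mul p1 q1"; cases "mul p2 q2"; simp add: tensor_mult_def comb_def split: option.splits)

lemma tensor_R: "Option.bind (tensor_mult mul (q1, q2) (r1, r2)) (\<lambda>b. tensor_mult mul (p1, p2) b)
   = comb (Option.bind (mul q1 r1) (\<lambda>b. mul p1 b)) (Option.bind (mul q2 r2) (\<lambda>b. mul p2 b))"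
  by (cases "mul q1 r1"; cases "mul q2 r2"; simp add: tensor_mult_def comb_def split: option.splits)

lemma tensor_assoc_gen:
  assumes "Option.bind (mul p1 q1) (\<lambda>a. mul a r1) = Option.bind (mul q1 r1) (\<lambda>b. mul p1 b)"
    "Option.bind (mul p2 q2) (\<lambda>a. mul a r2) = Option.bind (mul q2 r2) (\<lambda>b. mul p2 b)"
  shows "Option.bind (tensor_mult mul (p1, p2) (q1, q2)) (\<lambda>a. tensor_mult mul a (r1, r2))
       = Option.bind (tensor_mult mul (q1, q2) (r1, r2)) (\<lambda>b. tensor_mult mul (p1, p2) b)"
  unfolding tensor_L tensor_R assms ..

lemma tensor_assoc:
  assumes "gp p" "gp q" "gp r"
  shows "Option.bind (tensor_mult mono_mult p q) (\<lambda>a. tensor_mult mono_mult a r)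
       = Option.bind (tensor_mult mono_mult q r) (\<lambda>b. tensor_mult mono_mult p b)"
proof -
  obtain p1 p2 q1 q2 r1 r2 where e: "p = (p1, p2)" "q = (q1, q2)" "r = (r1, r2)" by (metis prod.exhaust)
  obtain a1 S1 a2 S2 b1 T1 b2 T2 c1 U1 c2 U2 where
    f: "p1 = (a1, S1)" "p2 = (a2, S2)" "q1 = (b1, T1)" "q2 = (b2, T2)" "r1 = (c1, U1)" "r2 = (c2, U2)"
    by (metis prod.exhaust)
  have fin: "finite S1" "finite S2" "finite T1" "finite T2" "finite U1" "finite U2"
    using assms unfolding e f gp_def gm_def by auto
  show ?thesis unfolding e f
    by (rule tensor_assoc_gen; rule mono_mult_assoc; simp add: fin)
qed

lemma good_KK_mult: "good x \<Longrightarrow> good y \<Longrightarrow> good (KK_mult x y)"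
proof -
  assume a: "good x" "good y"
  have f: "finite (KK_mult x y)" using a finite_alg_mult unfolding good_def KK_mult_def by metis
  have "gp m" if "m \<in> KK_mult x y" for m
  proof -
    have "m \<in> supp (tensor_mult mono_mult) x y" using subsetD[OF alg_mult_sub_supp, of m "tensor_mult mono_mult" x y] that unfolding KK_mult_def by simp
    then obtain p q where "p \<in> x" "q \<in> y" "tensor_mult mono_mult p q = Some m" unfolding supp_def by blast
    then show ?thesis using a tensor_gp unfolding good_def by blast
  qed
  then show ?thesis using f unfolding good_def by blast
qed

lemma KK_mult_comm: "KK_mult x y = KK_mult y x"
  unfolding KK_mult_def by (rule alg_mult_comm, rule tensor_comm)

lemma KK_mult_assoc: "good x \<Longrightarrow> good y \<Longrightarrow> good z \<Longrightarrow> KK_mult (KK_mult x y) z = KK_mult x (KK_mult y z)"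
  unfolding KK_mult_def good_def
  by (rule alg_mult_assoc) (auto intro: tensor_assoc)

lemma good_one: "good KK_one"
  unfolding good_def KK_one_def gp_def gm_def by simp

lemma KK_one_left:
  assumes "good x"
  shows "KK_mult KK_one x = x"
proof (rule set_eqI)
  fix m
  have fx: "finite x" using assms good_def by auto
  have t: "tensor_mult mono_mult ((0, {}), (0, {})) q = Some q" if "q \<in> x" for q
  proof -
    have "gp q" using assms that good_def by auto
    then show ?thesis unfolding tensor_mult_def gp_def gm_def
      by (cases q) (simp add: mono_one)
  qed
  have "sbit (tensor_mult mono_mult) KK_one x m = (\<Sum>q\<in>x. if q = m then 1 else 0)"
    unfolding sbit_def KK_one_def using t by (simp cong: sum.cong)
  also have "\<dots> = (if m \<in> x then 1 else 0)" using fx by (simp add: sum.delta')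
  finally show "m \<in> KK_mult KK_one x \<longleftrightarrow> m \<in> x"
    unfolding KK_mult_def using mem_alg_mult[OF _ fx, of KK_one m] by (simp add: KK_one_def)
qed

lemma alg_mult_single: "alg_mult mul {p} {q} = (case mul p q of None \<Rightarrow> {} | Some m \<Rightarrow> {m})"
proof (rule set_eqI)
  fix m
  have "sbit mul {p} {q} m = (if mul p q = Some m then 1 else 0)" unfolding sbit_def by simp
  then show "m \<in> alg_mult mul {p} {q} \<longleftrightarrow> m \<in> (case mul p q of None \<Rightarrow> {} | Some m \<Rightarrow> {m})"
    using mem_alg_mult[of "{p}" "{q}" m mul] by (cases "mul p q") auto
qed

lemma bit_add_one: "(u + v = (1::bit)) \<longleftrightarrow> (u = 1) \<noteq> (v = 1)"
  by (cases u; cases v) auto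

lemma symd_mem: "(m \<in> (B - C) \<union> (C - B)) \<longleftrightarrow> (m \<in> B) \<noteq> (m \<in> C)" by blast

lemma alg_mult_insertL0:
  assumes "a \<notin> x" "finite x" "finite y"
  shows "alg_mult mul (insert a x) y = (alg_mult mul {a} y - alg_mult mul x y) \<union> (alg_mult mul x y - alg_mult mul {a} y)"
proof (rule set_eqI)
  fix m
  have eq: "sbit mul (insert a x) y m = sbit mul {a} y m + sbit mul x y m"
    unfolding sbit_def by (simp only: sum.insert[OF assms(2,1)] sum.empty sum.insert[OF finite.emptyI empty_iff[THEN iffD1, THEN notI]] add_0_right)
  have f: "finite (insert a x)" "finite {a}" using assms by simp_all
  show "m \<in> alg_mult mul (insert a x) y \<longleftrightarrow> m \<in> (alg_mult mul {a} y - alg_mult mul x y) \<union> (alg_mult mul x y - alg_mult mul {a} y)"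
    unfolding symd_mem mem_alg_mult[OF f(1) assms(3)] mem_alg_mult[OF f(2) assms(3)] mem_alg_mult[OF assms(2,3)] eq
    by (rule bit_add_one)
qed

lemma alg_mult_insertR0:
  assumes "a \<notin> y" "finite x" "finite y"
  shows "alg_mult mul x (insert a y) = (alg_mult mul x {a} - alg_mult mul x y) \<union> (alg_mult mul x y - alg_mult mul x {a})"
proof -
  have "alg_mult mul x (insert a y) = alg_mult (\<lambda>p q. mul q p) (insert a y) x"
    unfolding alg_mult_def by (rule arg_cong[where f=Collect], rule ext, rule arg_cong[where f="\<lambda>c. odd c"],
      rule bij_betw_same_card[of prod.swap], auto simp: bij_betw_def inj_on_def image_def)
  moreover have "alg_mult mul x {a} = alg_mult (\<lambda>p q. mul q p) {a} x"
    unfolding alg_mult_def by (rule arg_cong[where f=Collect], rule ext, rule arg_cong[where f="\<lambda>c. odd c"],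
      rule bij_betw_same_card[of prod.swap], auto simp: bij_betw_def inj_on_def image_def)
  moreover have "alg_mult mul x y = alg_mult (\<lambda>p q. mul q p) y x"
    unfolding alg_mult_def by (rule arg_cong[where f=Collect], rule ext, rule arg_cong[where f="\<lambda>c. odd c"],
      rule bij_betw_same_card[of prod.swap], auto simp: bij_betw_def inj_on_def image_def)
  ultimately show ?thesis using alg_mult_insertL0[OF assms(1,3,2)] by simp
qed

lemma alg_mult_emptyL: "alg_mult mul {} y = {}" unfolding alg_mult_def by simp
lemma alg_mult_emptyR: "alg_mult mul x {} = {}" unfolding alg_mult_def by simp

lemma alg_mult_insertL:
  "a \<notin> x \<Longrightarrow> x \<noteq> {} \<Longrightarrow> finite x \<Longrightarrow> finite y \<Longrightarrow> alg_mult mul (insert a x) y = sym_diff (alg_mult mul {a} y) (alg_mult mul x y)"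
  by (rule alg_mult_insertL0)
lemma alg_mult_insertR:
  "a \<notin> y \<Longrightarrow> y \<noteq> {} \<Longrightarrow> finite x \<Longrightarrow> finite y \<Longrightarrow> alg_mult mul x (insert a y) = sym_diff (alg_mult mul x {a}) (alg_mult mul x y)"
  by (rule alg_mult_insertR0)

lemmas comp_simps = KK_mult_def alg_mult_insertL alg_mult_insertR alg_mult_single
   tensor_mult_def mono_mult_def Let_def Vbar_def Rbar_def bar_def

definition "Qi i = {((1::nat, {i::nat}), (0::nat, {})), ((0, {}), (1, {i}))}"
definition "Tij i j = {((1::nat, {i::nat}), (1::nat, {j})), ((1, {j}), (1, {i}))}"
definition "Wi i = {((1::nat, {}), (1::nat, {i::nat})), ((1, {i}), (1, {}))}"
definition "Pij i j = {((0::nat, {i::nat, j}), (0::nat, {})), ((0, {i}), (0, {j})), ((0, {j}), (0, {i})), ((0, {}), (0, {i, j}))}"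

lemma C1: "KK_mult (Vbar i) (Vbar i) = Qi i"
  by (simp add: comp_simps Qi_def; auto)
lemma C2: "i \<noteq> j \<Longrightarrow> KK_mult (Qi i) (Qi j) = Tij i j"
  by (simp add: comp_simps Qi_def Tij_def; auto)
lemma C3: "KK_mult (Qi i) (Qi i) = {}"
  by (simp add: comp_simps Qi_def; auto)
lemma C4: "i \<noteq> j \<Longrightarrow> KK_mult (Qi k) (Tij i j) = {}"
  by (simp add: comp_simps Qi_def Tij_def; auto)
lemma C5: "KK_mult Rbar Rbar = {}"
  by (simp add: comp_simps; auto)
lemma C6: "KK_mult Rbar (Qi i) = Wi i"
  by (simp add: comp_simps Qi_def Wi_def; auto)
lemma C7: "KK_mult (Wi i) (Vbar i) = {}"
  by (simp add: comp_simps Wi_def; auto)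
lemma C8: "KK_mult (Wi i) (Qi j) = {}"
  by (simp add: comp_simps Wi_def Qi_def; auto)
lemma C9: "i \<noteq> j \<Longrightarrow> KK_mult (Vbar i) (Vbar j) = Pij i j"
  by (simp add: comp_simps Pij_def; auto)
lemma C10: "i \<noteq> j \<Longrightarrow> KK_mult (Tij i j) (Pij i j) = {}"
  by (simp add: comp_simps Pij_def Tij_def; auto)

lemma good_bar: "fst m \<le> 1 \<Longrightarrow> finite (snd m) \<Longrightarrow> good (bar m)"
  unfolding good_def bar_def gp_def gm_def by auto
lemma good_Vbar: "good (Vbar i)" unfolding Vbar_def by (rule good_bar) auto
lemma good_Rbar: "good Rbar" unfolding Rbar_def by (rule good_bar) auto

lemma Vbar_inj: "Vbar i = Vbar j \<longleftrightarrow> i = j"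
proof
  assume h: "Vbar i = Vbar j"
  have "((0::nat, {i}), (0::nat, {})) \<in> Vbar i" by (simp add: Vbar_def bar_def)
  then have "((0, {i}), (0, {})) \<in> Vbar j" using h by simp
  then show "i = j" by (auto simp: Vbar_def bar_def)
qed simp

lemma Rbar_Vbar: "Rbar \<noteq> Vbar i"
proof
  assume "Rbar = Vbar i"
  then have "((1, {}), (0, {})) \<in> Vbar i" unfolding Rbar_def bar_def by auto
  then show False unfolding Vbar_def bar_def by auto
qed

definition goodl :: "elt2 list \<Rightarrow> bool" where "goodl fs \<longleftrightarrow> (\<forall>f\<in>set fs. good f)"

lemma good_prod: "goodl fs \<Longrightarrow> good (KK_prod fs)"
  by (induction fs) (auto simp: goodl_def KK_prod_def good_one good_KK_mult)

lemma KK_one_right: "good x \<Longrightarrow> KK_mult x KK_one = x"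
  using KK_one_left KK_mult_comm by metis

lemma prod_append: "goodl xs \<Longrightarrow> goodl ys \<Longrightarrow> KK_prod (xs @ ys) = KK_mult (KK_prod xs) (KK_prod ys)"
proof (induction xs)
  case Nil
  then show ?case using KK_one_left good_prod by (simp add: KK_prod_def)
next
  case (Cons a xs)
  have ga: "good a" and gx: "goodl xs" using Cons.prems by (auto simp: goodl_def)
  have "KK_prod ((a # xs) @ ys) = KK_mult a (KK_prod (xs @ ys))" by (simp add: KK_prod_def)
  also have "\<dots> = KK_mult a (KK_mult (KK_prod xs) (KK_prod ys))" using Cons gx by simp
  also have "\<dots> = KK_mult (KK_mult a (KK_prod xs)) (KK_prod ys)"
    using KK_mult_assoc[OF ga good_prod[OF gx] good_prod[OF Cons.prems(2)]] by simp
  also have "KK_mult a (KK_prod xs) = KK_prod (a # xs)" by (simp add: KK_prod_def)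
  finally show ?case .
qed

lemma prod_remove1: "goodl xs \<Longrightarrow> x \<in> set xs \<Longrightarrow> KK_prod xs = KK_mult x (KK_prod (remove1 x xs))"
proof (induction xs)
  case Nil then show ?case by simp
next
  case (Cons y ys)
  show ?case
  proof (cases "y = x")
    case True then show ?thesis by (simp add: KK_prod_def)
  next
    case False
    then have xin: "x \<in> set ys" using Cons.prems by simp
    have gy: "good y" and gys: "goodl ys" using Cons.prems by (auto simp: goodl_def)
    have gx: "good x" using Cons.prems(1) Cons.prems(2) by (auto simp: goodl_def)
    have gr: "goodl (remove1 x ys)" using gys by (auto simp: goodl_def dest: set_remove1_subset[THEN subsetD])
    have "KK_prod (y # ys) = KK_mult y (KK_prod ys)" by (simp add: KK_prod_def)
    also have "\<dots> = KK_mult y (KK_mult x (KK_prod (remove1 x ys)))" using Cons.IH[OF gys xin] by simp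
    also have "\<dots> = KK_mult (KK_mult y x) (KK_prod (remove1 x ys))"
      using KK_mult_assoc[OF gy gx good_prod[OF gr]] by simp
    also have "\<dots> = KK_mult (KK_mult x y) (KK_prod (remove1 x ys))" using KK_mult_comm by metis
    also have "\<dots> = KK_mult x (KK_mult y (KK_prod (remove1 x ys)))"
      using KK_mult_assoc[OF gx gy good_prod[OF gr]] by simp
    also have "KK_mult y (KK_prod (remove1 x ys)) = KK_prod (remove1 x (y # ys))"
      using False by (simp add: KK_prod_def)
    finally show ?thesis .
  qed
qed

lemma prod_mset: "goodl xs \<Longrightarrow> mset xs = mset ys \<Longrightarrow> KK_prod xs = KK_prod ys"
proof (induction xs arbitrary: ys)
  case Nil then show ?case by simp
next
  case (Cons x xs)
  have xin: "x \<in> set ys" using Cons.prems(2) by (metis list.set_intros(1) set_mset_mset)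
  have gys: "goodl ys" using Cons.prems by (metis goodl_def set_mset_mset)
  have "mset xs = mset (remove1 x ys)"
    by (metis Cons.prems(2) add_mset_remove_trivial mset.simps(2) mset_remove1)
  then have "KK_prod xs = KK_prod (remove1 x ys)" using Cons.IH Cons.prems(1) by (simp add: goodl_def)
  then show ?case using prod_remove1[OF gys xin] by (simp add: KK_prod_def)
qed

lemma zero_sub:
  assumes "goodl fs" "mset gs \<subseteq># mset fs" "KK_prod gs = {}"
  shows "KK_prod fs = {}"
proof -
  obtain C where C: "mset fs = mset gs + C" using assms(2) by (metis subset_mset.add_diff_inverse)
  obtain hs where hs: "mset hs = C" using ex_mset by blast
  have m: "mset (gs @ hs) = mset fs" using C hs by simp
  have g: "goodl (gs @ hs)" using assms(1) m by (metis goodl_def set_mset_mset)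
  have gg: "goodl gs" "goodl hs" using g by (auto simp: goodl_def)
  have "KK_prod fs = KK_prod (gs @ hs)" using prod_mset[OF g m] by simp
  also have "\<dots> = KK_mult (KK_prod gs) (KK_prod hs)" by (rule prod_append[OF gg])
  finally show ?thesis using assms(3) by (simp add: KK_mult_def alg_mult_emptyL)
qed

lemma prod1: "good a \<Longrightarrow> KK_prod [a] = a"
  by (simp add: KK_prod_def KK_one_right)
lemma prod2: "good b \<Longrightarrow> KK_prod [a, b] = KK_mult a b"
  by (simp add: KK_prod_def KK_one_right)

lemma gl: "goodl [Vbar i, Vbar j]" "goodl [Vbar i]" "goodl [Rbar]"
  by (auto simp: goodl_def good_Vbar good_Rbar)

lemma Z1: "KK_prod [Rbar, Rbar] = {}"
  using prod2[OF good_Rbar] C5 by simp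

lemma Z2: "KK_prod [Vbar i, Vbar i, Vbar i, Vbar i] = {}"
proof -
  have "KK_prod [Vbar i, Vbar i, Vbar i, Vbar i] = KK_prod ([Vbar i, Vbar i] @ [Vbar i, Vbar i])" by simp
  also have "\<dots> = {}" using prod_append[OF gl(1) gl(1)] prod2[OF good_Vbar] C1 C3 by simp
  finally show ?thesis .
qed

lemma Z3: "i \<noteq> j \<Longrightarrow> KK_prod [Vbar i, Vbar i, Vbar j, Vbar j, Vbar i, Vbar j] = {}"
proof -
  assume ij: "i \<noteq> j"
  have g4: "goodl ([Vbar i, Vbar i] @ [Vbar j, Vbar j])" by (auto simp: goodl_def good_Vbar)
  have "KK_prod [Vbar i, Vbar i, Vbar j, Vbar j, Vbar i, Vbar j] = KK_prod (([Vbar i, Vbar i] @ [Vbar j, Vbar j]) @ [Vbar i, Vbar j])" by simp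
  also have "\<dots> = KK_mult (KK_mult (KK_prod [Vbar i, Vbar i]) (KK_prod [Vbar j, Vbar j])) (KK_prod [Vbar i, Vbar j])"
    using prod_append[OF g4 gl(1)] prod_append[OF gl(1) gl(1)] by simp
  also have "\<dots> = {}" using prod2[OF good_Vbar] C1 C2[OF ij] C9[OF ij] C10[OF ij] by simp
  finally show ?thesis .
qed

lemma Z4: "KK_prod [Rbar, Vbar i, Vbar i, Vbar i] = {}"
proof -
  have g3: "goodl ([Rbar] @ [Vbar i, Vbar i])" by (auto simp: goodl_def good_Vbar good_Rbar)
  have "KK_prod [Rbar, Vbar i, Vbar i, Vbar i] = KK_prod (([Rbar] @ [Vbar i, Vbar i]) @ [Vbar i])" by simp
  also have "\<dots> = KK_mult (KK_mult (KK_prod [Rbar]) (KK_prod [Vbar i, Vbar i])) (KK_prod [Vbar i])"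
    using prod_append[OF g3 gl(2)] prod_append[OF gl(3) gl(1)] by simp
  also have "\<dots> = {}" using prod2[OF good_Vbar] prod1[OF good_Vbar] prod1[OF good_Rbar] C1 C6 C7 by simp
  finally show ?thesis .
qed

lemma Z5: "KK_prod [Rbar, Vbar i, Vbar i, Vbar j, Vbar j] = {}"
proof -
  have g3: "goodl ([Rbar] @ [Vbar i, Vbar i])" by (auto simp: goodl_def good_Vbar good_Rbar)
  have "KK_prod [Rbar, Vbar i, Vbar i, Vbar j, Vbar j] = KK_prod (([Rbar] @ [Vbar i, Vbar i]) @ [Vbar j, Vbar j])" by simp
  also have "\<dots> = KK_mult (KK_mult (KK_prod [Rbar]) (KK_prod [Vbar i, Vbar i])) (KK_prod [Vbar j, Vbar j])"
    using prod_append[OF g3 gl(1)] prod_append[OF gl(3) gl(1)] by simp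
  also have "\<dots> = {}" using prod2[OF good_Vbar] prod1[OF good_Rbar] C1 C6 C8 by simp
  finally show ?thesis .
qed

lemma Z6: "i \<noteq> j \<Longrightarrow> KK_prod [Vbar k, Vbar k, Vbar i, Vbar i, Vbar j, Vbar j] = {}"
proof -
  assume ij: "i \<noteq> j"
  have g4: "goodl ([Vbar i, Vbar i] @ [Vbar j, Vbar j])" by (auto simp: goodl_def good_Vbar)
  have "KK_prod [Vbar k, Vbar k, Vbar i, Vbar i, Vbar j, Vbar j] = KK_prod ([Vbar k, Vbar k] @ ([Vbar i, Vbar i] @ [Vbar j, Vbar j]))" by simp
  also have "\<dots> = KK_mult (KK_prod [Vbar k, Vbar k]) (KK_mult (KK_prod [Vbar i, Vbar i]) (KK_prod [Vbar j, Vbar j]))"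
    using prod_append[OF gl(1) g4] prod_append[OF gl(1) gl(1)] by simp
  also have "\<dots> = {}" using prod2[OF good_Vbar] C1 C2[OF ij] C4[OF ij] by simp
  finally show ?thesis .
qed

lemma alg_mult_inj:
  assumes "\<And>p1 q1 p2 q2 m. p1 \<in> x \<Longrightarrow> q1 \<in> y \<Longrightarrow> p2 \<in> x \<Longrightarrow> q2 \<in> y \<Longrightarrow>
      mul p1 q1 = Some m \<Longrightarrow> mul p2 q2 = Some m \<Longrightarrow> p1 = p2 \<and> q1 = q2"
  shows "alg_mult mul x y = supp mul x y"
proof
  show "alg_mult mul x y \<subseteq> supp mul x y" by (rule alg_mult_sub_supp)
  show "supp mul x y \<subseteq> alg_mult mul x y"
  proof
    fix m assume "m \<in> supp mul x y"
    then obtain p q where pq: "p \<in> x" "q \<in> y" "mul p q = Some m" unfolding supp_def by blast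
    have "{(p', q'). p' \<in> x \<and> q' \<in> y \<and> mul p' q' = Some m} = {(p, q)}"
      using assms pq by blast
    then show "m \<in> alg_mult mul x y" unfolding alg_mult_def by simp
  qed
qed

lemma mm0: "X \<inter> Y = {} \<Longrightarrow> mono_mult (0, X) (0, Y) = Some (0, X \<union> Y)"
  unfolding mono_mult_def Let_def by simp
lemma mm1: "X \<inter> Y = {} \<Longrightarrow> mono_mult (1, X) (0, Y) = Some (1, X \<union> Y)"
  unfolding mono_mult_def Let_def by simp

definition Par :: "nat set \<Rightarrow> elt2" where
  "Par S = {((0, A), (0, S - A)) | A. A \<subseteq> S}"

lemma par_step:
  assumes "a \<notin> S"
  shows "KK_mult (Vbar a) (Par S) = Par (insert a S)"
proof -
  have t1: "tensor_mult mono_mult ((0, {a}), (0, {})) ((0, A), (0, S - A)) = Some ((0, insert a A), (0, S - A))"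
    if "A \<subseteq> S" for A
  proof -
    have "mono_mult (0, {a}) (0, A) = Some (0, insert a A)" using mm0[of "{a}" A] that assms by auto
    then show ?thesis by (simp add: tensor_mult_def mono_mult_def)
  qed
  have t2: "tensor_mult mono_mult ((0, {}), (0, {a})) ((0, A), (0, S - A)) = Some ((0, A), (0, insert a (S - A)))"
    if "A \<subseteq> S" for A
    using that assms by (auto simp: tensor_mult_def mm0)
  have "KK_mult (Vbar a) (Par S) = supp (tensor_mult mono_mult) (Vbar a) (Par S)"
    unfolding KK_mult_def
  proof (rule alg_mult_inj)
    fix p1 q1 p2 q2 m
    assume h: "p1 \<in> Vbar a" "q1 \<in> Par S" "p2 \<in> Vbar a" "q2 \<in> Par S"
      "tensor_mult mono_mult p1 q1 = Some m" "tensor_mult mono_mult p2 q2 = Some m"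
    obtain A1 where A1: "A1 \<subseteq> S" "q1 = ((0, A1), (0, S - A1))" using h(2) unfolding Par_def by blast
    obtain A2 where A2: "A2 \<subseteq> S" "q2 = ((0, A2), (0, S - A2))" using h(4) unfolding Par_def by blast
    have p: "p1 = ((0, {a}), (0, {})) \<or> p1 = ((0, {}), (0, {a}))" "p2 = ((0, {a}), (0, {})) \<or> p2 = ((0, {}), (0, {a}))"
      using h(1,3) unfolding Vbar_def bar_def by auto
    have aA: "a \<notin> A1" "a \<notin> A2" using A1 A2 assms by auto
    have dd: "S - A1 = S - A2 \<Longrightarrow> A1 = A2" using A1(1) A2(1) by blast
    have m1: "p1 = ((0, {a}), (0, {})) \<Longrightarrow> m = ((0, insert a A1), (0, S - A1))"
      using h(5) t1[OF A1(1)] A1(2) by simp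
    have m2: "p1 = ((0, {}), (0, {a})) \<Longrightarrow> m = ((0, A1), (0, insert a (S - A1)))"
      using h(5) t2[OF A1(1)] A1(2) by simp
    have m3: "p2 = ((0, {a}), (0, {})) \<Longrightarrow> m = ((0, insert a A2), (0, S - A2))"
      using h(6) t1[OF A2(1)] A2(2) by simp
    have m4: "p2 = ((0, {}), (0, {a})) \<Longrightarrow> m = ((0, A2), (0, insert a (S - A2)))"
      using h(6) t2[OF A2(1)] A2(2) by simp
    show "p1 = p2 \<and> q1 = q2"
    proof (cases "p1 = ((0, {a}), (0, {}))")
      case c1: True
      show ?thesis
      proof (cases "p2 = ((0, {a}), (0, {}))")
        case True
        then have "S - A1 = S - A2" using m1 m3 c1 by simp
        then show ?thesis using dd A1(2) A2(2) c1 True by simp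
      next
        case False
        then have "insert a A1 = A2" using m1 m4 c1 p(2) by simp
        then show ?thesis using aA by blast
      qed
    next
      case c1: False
      then have c1': "p1 = ((0, {}), (0, {a}))" using p(1) by blast
      show ?thesis
      proof (cases "p2 = ((0, {a}), (0, {}))")
        case True
        then have "A1 = insert a A2" using m2 m3 c1' by simp
        then show ?thesis using aA by blast
      next
        case False
        then have "A1 = A2" using m2 m4 c1' p(2) by simp
        then show ?thesis using A1(2) A2(2) c1' False p(2) by simp
      qed
    qed
  qed
  also have "\<dots> = Par (insert a S)"
  proof
    show "supp (tensor_mult mono_mult) (Vbar a) (Par S) \<subseteq> Par (insert a S)"
    proof
      fix m assume "m \<in> supp (tensor_mult mono_mult) (Vbar a) (Par S)"
      then obtain p A where pA: "p = ((0, {a}), (0, {})) \<or> p = ((0, {}), (0, {a}))" "A \<subseteq> S"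
        "tensor_mult mono_mult p ((0, A), (0, S - A)) = Some m"
        unfolding supp_def Par_def Vbar_def bar_def by blast
      show "m \<in> Par (insert a S)"
      proof (cases "p = ((0, {a}), (0, {}))")
        case True
        then have "m = ((0, insert a A), (0, S - A))" using pA t1 by simp
        moreover have "S - A = insert a S - insert a A" using assms pA(2) by blast
        ultimately show ?thesis using pA(2) unfolding Par_def by blast
      next
        case False
        then have "m = ((0, A), (0, insert a (S - A)))" using pA t2 by simp
        moreover have "insert a (S - A) = insert a S - A" using assms pA(2) by blast
        ultimately show ?thesis using pA(2) unfolding Par_def by blast
      qed
    qed
    show "Par (insert a S) \<subseteq> supp (tensor_mult mono_mult) (Vbar a) (Par S)"
    proof
      fix m assume "m \<in> Par (insert a S)"
      then obtain B where B: "B \<subseteq> insert a S" "m = ((0, B), (0, insert a S - B))" unfolding Par_def by blast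
      show "m \<in> supp (tensor_mult mono_mult) (Vbar a) (Par S)"
      proof (cases "a \<in> B")
        case True
        define A where "A = B - {a}"
        have A: "A \<subseteq> S" "((0, A), (0, S - A)) \<in> Par S" using B assms unfolding A_def Par_def by auto
        have "m = ((0, insert a A), (0, S - A))" using B True assms unfolding A_def by auto
        then show ?thesis using t1[OF A(1)] A(2) unfolding supp_def Vbar_def bar_def by blast
      next
        case False
        have A: "B \<subseteq> S" "((0, B), (0, S - B)) \<in> Par S" using B False unfolding Par_def by auto
        have "m = ((0, B), (0, insert a (S - B)))" using B False by auto
        then show ?thesis using t2[OF A(1)] A(2) unfolding supp_def Vbar_def bar_def by blast
      qed
    qed
  qed
  finally show ?thesis .
qed

lemma prod_range: "KK_prod (map Vbar [a..<b]) = Par {a..<b}"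
proof (induction "b - a" arbitrary: a)
  case 0
  then have "[a..<b] = []" "{a..<b} = {}" by auto
  moreover have "Par {} = KK_one" unfolding Par_def KK_one_def by auto
  ultimately show ?case by (simp add: KK_prod_def)
next
  case (Suc k)
  then have ab: "a < b" by simp
  have "KK_prod (map Vbar [a..<b]) = KK_mult (Vbar a) (KK_prod (map Vbar [Suc a..<b]))"
    using ab by (simp add: upt_conv_Cons KK_prod_def)
  also have "KK_prod (map Vbar [Suc a..<b]) = Par {Suc a..<b}" using Suc by simp
  also have "KK_mult (Vbar a) (Par {Suc a..<b}) = Par (insert a {Suc a..<b})" by (rule par_step) simp
  also have "insert a {Suc a..<b} = {a..<b}" using ab by auto
  finally show ?case .
qed

definition "Ci i = {((0::nat, {i::nat}), (1::nat, {i})), ((1, {i}), (0, {i}))}"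
definition "Di i j = {((1::nat, {i::nat}), (1::nat, {i, j})), ((1, {i, j}), (1, {i}))}"

lemma C11: "KK_mult (Vbar i) (Qi i) = Ci i"
  by (simp add: comp_simps Qi_def Ci_def; auto)
lemma C12: "i \<noteq> j \<Longrightarrow> KK_mult (Ci i) (Qi j) = Di i j"
  by (simp add: comp_simps Qi_def Ci_def Di_def; auto)

lemma mono_un: "mono_mult p q = Some r \<Longrightarrow> snd r = snd p \<union> snd q"
  unfolding mono_mult_def Let_def by (auto split: if_splits)

lemma tensor_un: "tensor_mult mono_mult p q = Some m \<Longrightarrow>
   snd (fst m) = snd (fst p) \<union> snd (fst q) \<and> snd (snd m) = snd (snd p) \<union> snd (snd q)"
proof -
  assume a: "tensor_mult mono_mult p q = Some m"
  obtain m1 m2 where s: "mono_mult (fst p) (fst q) = Some m1" "mono_mult (snd p) (snd q) = Some m2"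
      "m = (m1, m2)"
    using a unfolding tensor_mult_def by (auto split: option.splits)
  show ?thesis using mono_un[OF s(1)] mono_un[OF s(2)] s(3) by simp
qed

lemma D_Par_nonempty:
  assumes "1 \<notin> S" "2 \<notin> S"
  shows "KK_mult (Di 1 2) (Par S) \<noteq> {}"
proof -
  define d1 :: "mono \<times> mono" where "d1 = ((1, {1}), (1, {1, 2}))"
  define q0 :: "mono \<times> mono" where "q0 = ((0, S), (0, {}))"
  define m0 :: "mono \<times> mono" where "m0 = ((1, insert 1 S), (1, {1, 2}))"
  have q0P: "q0 \<in> Par S" unfolding q0_def Par_def by auto
  have d1D: "d1 \<in> Di 1 2" unfolding d1_def Di_def by auto
  have pr: "tensor_mult mono_mult d1 q0 = Some m0"
  proof -
    have "{1::nat} \<inter> S = {}" using assms by auto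
    then have "mono_mult (1, {1}) (0, S) = Some (1, insert 1 S)" using mm1[of "{1}" S] by simp
    moreover have "mono_mult (1, {1, 2}) (0, {}) = Some (1, {1, 2})" unfolding mono_mult_def by simp
    ultimately show ?thesis unfolding tensor_mult_def d1_def q0_def m0_def by simp
  qed
  have "{(p, q). p \<in> Di 1 2 \<and> q \<in> Par S \<and> tensor_mult mono_mult p q = Some m0} = {(d1, q0)}"
  proof
    show "{(d1, q0)} \<subseteq> {(p, q). p \<in> Di 1 2 \<and> q \<in> Par S \<and> tensor_mult mono_mult p q = Some m0}"
      using pr q0P d1D by auto
    show "{(p, q). p \<in> Di 1 2 \<and> q \<in> Par S \<and> tensor_mult mono_mult p q = Some m0} \<subseteq> {(d1, q0)}"
    proof (clarify)
      fix p q assume h: "p \<in> Di 1 2" "q \<in> Par S" "tensor_mult mono_mult p q = Some m0"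
      obtain A where A: "A \<subseteq> S" "q = ((0, A), (0, S - A))" using h(2) unfolding Par_def by blast
      have u: "snd (fst m0) = snd (fst p) \<union> A" "snd (snd m0) = snd (snd p) \<union> (S - A)"
        using tensor_un[OF h(3)] A(2) by auto
      have p: "p = d1 \<or> p = ((1, {1, 2}), (1, {1}))" using h(1) unfolding Di_def d1_def by auto
      show "p = d1 \<and> q = q0"
      proof (cases "p = d1")
        case True
        then have "{1, 2} \<union> (S - A) = {1::nat, 2}" using u(2) unfolding d1_def m0_def by simp
        then have "S - A \<subseteq> {1, 2}" by blast
        then have "S - A = {}" using assms by blast
        then have "A = S" using A(1) by blast
        then show ?thesis using True A(2) unfolding q0_def by simp
      next
        case False
        then have "insert 1 S = {1, 2} \<union> A" using p u(1) unfolding m0_def by auto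
        then have "2 \<in> insert 1 S" by auto
        then show ?thesis using assms by simp
      qed
    qed
  qed
  then have "m0 \<in> KK_mult (Di 1 2) (Par S)" unfolding KK_mult_def alg_mult_def by simp
  then show ?thesis by blast
qed

lemma good_Par: "finite S \<Longrightarrow> good (Par S)"
proof -
  assume f: "finite S"
  have "Par S = (\<lambda>A. ((0, A), (0, S - A))) ` Pow S" unfolding Par_def by auto
  then have "finite (Par S)" using f by simp
  then show ?thesis unfolding good_def Par_def gp_def gm_def using f by (auto intro: finite_subset)
qed

lemma part1:
  shows "KK_prod ([Vbar 1, Vbar 1, Vbar 1, Vbar 2, Vbar 2] @ map Vbar [3..<n]) \<noteq> {}"
proof -
  define P0 where "P0 = Par {3..<n}"
  have gP: "good P0" unfolding P0_def by (rule good_Par) simp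
  have gV: "good (Vbar 1)" "good (Vbar 2)" by (rule good_Vbar)+
  have gQ: "good (Qi 1)" "good (Qi 2)" using good_KK_mult[OF good_Vbar good_Vbar] C1 by metis+
  have gC: "good (Ci 1)" using good_KK_mult[OF gV(1) gQ(1)] C11 by metis
  have gX: "good (KK_mult (Qi 2) P0)" using good_KK_mult[OF gQ(2) gP] .
  have "KK_prod ([Vbar 1, Vbar 1, Vbar 1, Vbar 2, Vbar 2] @ map Vbar [3..<n])
     = KK_mult (Vbar 1) (KK_mult (Vbar 1) (KK_mult (Vbar 1) (KK_mult (Vbar 2) (KK_mult (Vbar 2) P0))))"
    using prod_range[of 3 n] unfolding P0_def by (simp add: KK_prod_def)
  also have "KK_mult (Vbar 2) (KK_mult (Vbar 2) P0) = KK_mult (Qi 2) P0"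
    using KK_mult_assoc[OF gV(2) gV(2) gP] C1 by simp
  also have "KK_mult (Vbar 1) (KK_mult (Vbar 1) (KK_mult (Qi 2) P0)) = KK_mult (Qi 1) (KK_mult (Qi 2) P0)"
    using KK_mult_assoc[OF gV(1) gV(1) gX] C1 by simp
  also have "KK_mult (Vbar 1) (KK_mult (Qi 1) (KK_mult (Qi 2) P0)) = KK_mult (Ci 1) (KK_mult (Qi 2) P0)"
    using KK_mult_assoc[OF gV(1) gQ(1) gX] C11 by simp
  also have "\<dots> = KK_mult (Di 1 2) P0"
    using KK_mult_assoc[OF gC gQ(2) gP] C12[of 1 2] by simp
  finally show ?thesis using D_Par_nonempty[of "{3..<n}"] unfolding P0_def by simp
qed

lemma size_sum: "set_mset M \<subseteq> U \<Longrightarrow> finite U \<Longrightarrow> size M = (\<Sum>x\<in>U. count M x)"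
proof (induction M)
  case empty then show ?case by simp
next
  case (add a M)
  have aU: "a \<in> U" using add.prems by simp
  have "(\<Sum>x\<in>U. count (add_mset a M) x) = (\<Sum>x\<in>U. count M x + (if a = x then 1 else 0))"
    by (intro sum.cong) auto
  also have "\<dots> = (\<Sum>x\<in>U. count M x) + 1" using aU add.prems(2) by (simp add: sum.distrib)
  finally show ?case using add by simp
qed

lemma msub: "(\<And>a. a \<in> set gs \<Longrightarrow> count (mset gs) a \<le> count M a) \<Longrightarrow> mset gs \<subseteq># M"
  unfolding subseteq_mset_def by (metis count_eq_zero_iff le0 set_mset_mset)

lemma Vbar_Rbar: "Vbar i \<noteq> Rbar" using Rbar_Vbar by metis

lemma part2:
  assumes n1: "n \<ge> 3" and len: "length fs \<ge> n + 3"
    and H: "\<forall>f \<in> set fs. f = Rbar \<or> (\<exists>i. 1 \<le> i \<and> i \<le> n - 1 \<and> f = Vbar i)"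
  shows "KK_prod fs = {}"
proof (rule ccontr)
  assume nz: "KK_prod fs \<noteq> {}"
  have gf: "good f" if "f \<in> set fs" for f
  proof -
    have "f = Rbar \<or> (\<exists>i. f = Vbar i)" using H that by blast
    then show ?thesis using good_Rbar good_Vbar by auto
  qed
  have gl: "goodl fs" unfolding goodl_def using gf by blast
  define M where "M = mset fs"
  define k where "k i = count M (Vbar i)" for i
  define e where "e = count M Rbar"
  have Z: False if "KK_prod gs = {}" "\<And>a. a \<in> set gs \<Longrightarrow> count (mset gs) a \<le> count M a" for gs
  proof -
    have "mset gs \<subseteq># M" by (rule msub) (rule that(2))
    then show False using zero_sub[OF gl _ that(1)] nz unfolding M_def by simp
  qed
  have h1: "e \<le> 1"
  proof (rule ccontr)
    assume c: "\<not> e \<le> 1"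
    show False
    proof (rule Z[OF Z1])
      fix a assume "a \<in> set [Rbar, Rbar]"
      then have "a = Rbar" by simp
      then show "count (mset [Rbar, Rbar]) a \<le> count M a" using c unfolding e_def by simp
    qed
  qed
  have h2: "k i \<le> 3" for i
  proof (rule ccontr)
    assume c: "\<not> k i \<le> 3"
    show False
    proof (rule Z[OF Z2[of i]])
      fix a assume "a \<in> set [Vbar i, Vbar i, Vbar i, Vbar i]"
      then have "a = Vbar i" by simp
      then show "count (mset [Vbar i, Vbar i, Vbar i, Vbar i]) a \<le> count M a" using c unfolding k_def by simp
    qed
  qed
  have h3: False if "i \<noteq> j" "k i \<ge> 3" "k j \<ge> 3" for i j
  proof (rule Z[OF Z3[OF that(1)]])
    fix a assume "a \<in> set [Vbar i, Vbar i, Vbar j, Vbar j, Vbar i, Vbar j]"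
    then have "a = Vbar i \<or> a = Vbar j" by auto
    then show "count (mset [Vbar i, Vbar i, Vbar j, Vbar j, Vbar i, Vbar j]) a \<le> count M a"
      using that unfolding k_def by (auto simp: Vbar_inj)
  qed
  have h4: False if "e \<ge> 1" "k i \<ge> 3" for i
  proof (rule Z[OF Z4[of i]])
    fix a assume "a \<in> set [Rbar, Vbar i, Vbar i, Vbar i]"
    then have "a = Rbar \<or> a = Vbar i" by auto
    then show "count (mset [Rbar, Vbar i, Vbar i, Vbar i]) a \<le> count M a"
      using that unfolding k_def e_def by (auto simp: Vbar_Rbar Rbar_Vbar)
  qed
  have h5: False if "e \<ge> 1" "i \<noteq> j" "k i \<ge> 2" "k j \<ge> 2" for i j
  proof (rule Z[OF Z5[of i j]])
    fix a assume "a \<in> set [Rbar, Vbar i, Vbar i, Vbar j, Vbar j]"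
    then have "a = Rbar \<or> a = Vbar i \<or> a = Vbar j" by auto
    then show "count (mset [Rbar, Vbar i, Vbar i, Vbar j, Vbar j]) a \<le> count M a"
    proof (elim disjE)
      assume "a = Rbar" then show ?thesis using that(1) unfolding e_def by (simp add: Rbar_Vbar Vbar_Rbar)
    next
      assume "a = Vbar i" then show ?thesis using that(2,3) unfolding k_def by (simp add: Vbar_Rbar Rbar_Vbar Vbar_inj)
    next
      assume "a = Vbar j" then show ?thesis using that(2,4) unfolding k_def by (simp add: Vbar_Rbar Rbar_Vbar Vbar_inj)
    qed
  qed
  have h6: False if "i \<noteq> j" "l \<noteq> i" "l \<noteq> j" "k i \<ge> 2" "k j \<ge> 2" "k l \<ge> 2" for i j l
  proof (rule Z[OF Z6[OF that(1), of l]])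
    fix a assume "a \<in> set [Vbar l, Vbar l, Vbar i, Vbar i, Vbar j, Vbar j]"
    then have "a = Vbar l \<or> a = Vbar i \<or> a = Vbar j" by auto
    then show "count (mset [Vbar l, Vbar l, Vbar i, Vbar i, Vbar j, Vbar j]) a \<le> count M a"
    proof (elim disjE)
      assume "a = Vbar l" then show ?thesis using that unfolding k_def by (simp add: Vbar_inj)
    next
      assume "a = Vbar i" then show ?thesis using that unfolding k_def by (simp add: Vbar_inj)
    next
      assume "a = Vbar j" then show ?thesis using that unfolding k_def by (simp add: Vbar_inj)
    qed
  qed
  define S where "S = {1..n - 1}"
  define A where "A = S \<inter> {i. 2 \<le> k i}"
  define B where "B = S \<inter> {i. 3 \<le> k i}"
  have fS: "finite S" "finite A" "finite B" unfolding S_def A_def B_def by auto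
  have cS: "card S = n - 1" unfolding S_def by simp
  have sub: "set_mset M \<subseteq> insert Rbar (Vbar ` S)" using H unfolding M_def S_def by auto
  have "length fs = size M" unfolding M_def by simp
  also have "\<dots> = (\<Sum>x\<in>insert Rbar (Vbar ` S). count M x)" using size_sum[OF sub] fS by simp
  also have "\<dots> = e + (\<Sum>x\<in>Vbar ` S. count M x)"
    using fS Rbar_Vbar unfolding e_def by (subst sum.insert) auto
  also have "(\<Sum>x\<in>Vbar ` S. count M x) = (\<Sum>i\<in>S. k i)"
    unfolding k_def by (subst sum.reindex) (auto simp: inj_on_def Vbar_inj)
  also have "(\<Sum>i\<in>S. k i) \<le> (\<Sum>i\<in>S. 1 + of_bool (2 \<le> k i) + of_bool (3 \<le> k i))"
  proof (rule sum_mono)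
    fix i show "k i \<le> 1 + of_bool (2 \<le> k i) + of_bool (3 \<le> k i)" using h2[of i] by auto
  qed
  also have "\<dots> = (\<Sum>i\<in>S. 1) + (\<Sum>i\<in>S. of_bool (2 \<le> k i)) + (\<Sum>i\<in>S. of_bool (3 \<le> k i))"
    by (simp only: sum.distrib)
  also have "\<dots> = card S + card A + card B"
    using fS(1) unfolding A_def B_def by (simp only: sum_of_bool_eq card_eq_sum of_nat_id)
  finally have L: "length fs \<le> e + (card S + card A + card B)" by simp
  have cB: "card B \<le> 1"
    using card_le_Suc0_iff_eq[OF fS(3)] h3 unfolding B_def by (metis One_nat_def IntD2 mem_Collect_eq)
  have cA: "card A \<le> 2"
  proof (rule ccontr)
    assume "\<not> card A \<le> 2"
    then obtain T where T: "T \<subseteq> A" "card T = 3" by (metis not_le_imp_less Suc_leI numeral_2_eq_2 numeral_3_eq_3 obtain_subset_with_card_n)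
    then obtain x y z where "T = {x, y, z}" "x \<noteq> y" "y \<noteq> z" "x \<noteq> z" using card_3_iff by metis
    then show False using T(1) h6[of x y z] unfolding A_def by auto
  qed
  show False
  proof (cases "e = 0")
    case True
    then show ?thesis using L cA cB cS len n1 by linarith
  next
    case False
    then have e1: "e = 1" "e \<ge> 1" using h1 by auto
    have "B = {}" using h4[OF e1(2)] unfolding B_def by auto
    moreover have "card A \<le> 1"
      using card_le_Suc0_iff_eq[OF fS(2)] h5[OF e1(2)] unfolding A_def by (metis One_nat_def IntD2 mem_Collect_eq)
    ultimately show ?thesis using L e1 cS len n1 by simp
  qed
qed

theorem mainTheorem17:
  fixes n :: nat
  assumes "n \<ge> 3"
  shows "KK_prod ([Vbar 1, Vbar 1, Vbar 1, Vbar 2, Vbar 2] @ map Vbar [3..<n]) \<noteq> {}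
       \<and> (\<forall>fs. length fs \<ge> n + 3 \<longrightarrow>
              (\<forall>f \<in> set fs. f = Rbar \<or> (\<exists>i. 1 \<le> i \<and> i \<le> n - 1 \<and> f = Vbar i)) \<longrightarrow>
              KK_prod fs = {})"
  using part1[of n] part2[OF assms] by blast

end
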